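(* Fix $\alpha\in(0,1)$. Let $(P_i)_{i\ge0}$ be the $\alpha$-random walk and $X_i=1$ if $P_i$ is visible, $X_i=0$ otherwise. Then $$\mathbf V(X_1+\cdots+X_n)\ll n^{3/2}\log n,$$ with implied constant depending only on $\alpha$.
   Context: The $\alpha$-random walk: $P_0=(0,0)$ and $P_{i+1}=P_i+(1,0)$ with probability $\alpha$, $P_{i+1}=P_i+(0,1)$ with probability $1-\alpha$, independently. A lattice point $(a,b)$ is visible if $\gcd(a,b)=1$. $\mathbf V$ denotes variance. *)

theory Defs
  imports "HOL-Probability.Probability"
begin

text \<open>Steps of the alpha-random walk: step j is True (move (1,0)) with probability alpha,
  False (move (0,1)) with probability 1 - alpha, independently.\<close>

definition walk_steps :: "real \<Rightarrow> nat \<Rightarrow> (nat \<Rightarrow> bool) pmf" where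
  "walk_steps \<alpha> n = Pi_pmf {..<n} False (\<lambda>_. bernoulli_pmf \<alpha>)"

definition walk_pos :: "(nat \<Rightarrow> bool) \<Rightarrow> nat \<Rightarrow> nat \<times> nat" where
  "walk_pos \<omega> i = (card {j. j < i \<and> \<omega> j}, card {j. j < i \<and> \<not> \<omega> j})"

definition visible :: "nat \<times> nat \<Rightarrow> bool" where
  "visible p = (gcd (fst p) (snd p) = 1)"

definition vis_ind :: "(nat \<Rightarrow> bool) \<Rightarrow> nat \<Rightarrow> real" where
  "vis_ind \<omega> i = (if visible (walk_pos \<omega> i) then 1 else 0)"

end

theory Submission
  imports Defs "HOL-Computational_Algebra.Primes"
begin


lemma cos_aux1: "x \<ge> 0 \<Longrightarrow> cos x - 1 + x^2/2 \<ge> (0::real)"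
proof -
  assume x: "x \<ge> 0"
  let ?f = "\<lambda>x::real. cos x - 1 + x^2/2"
  have "\<And>u. \<lbrakk>0 \<le> u; u \<le> x\<rbrakk> \<Longrightarrow> (?f has_real_derivative u - sin u) (at u)"
    by (auto intro!: derivative_eq_intros simp: field_simps)
  then have "?f x \<ge> ?f 0"
    by (intro DERIV_nonneg_imp_nondecreasing [OF x]) (use sin_x_le_x in fastforce)
  then show ?thesis by simp
qed

lemma sin_aux1: "x \<ge> 0 \<Longrightarrow> sin x - x + x^3/6 \<ge> (0::real)"
proof -
  assume x: "x \<ge> 0"
  let ?f = "\<lambda>x::real. sin x - x + x^3/6"
  have "\<And>u. \<lbrakk>0 \<le> u; u \<le> x\<rbrakk> \<Longrightarrow> (?f has_real_derivative cos u - 1 + u^2/2) (at u)"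
    by (auto intro!: derivative_eq_intros simp: field_simps)
  then have "?f x \<ge> ?f 0"
    by (intro DERIV_nonneg_imp_nondecreasing [OF x]) (use cos_aux1 in fastforce)
  then show ?thesis by simp
qed

lemma sin_ge_third: "0 \<le> (y::real) \<Longrightarrow> y \<le> 2 \<Longrightarrow> sin y \<ge> y / 3"
proof -
  assume a: "0 \<le> y" "y \<le> 2"
  have "y^3 = y * y^2" by (simp add: eval_nat_numeral)
  have "y^2 \<le> 2^2" using a by (intro power_mono) auto
  then have "y^2 \<le> 4" by simp
  then have "y * y^2 \<le> y * 4" using a by (intro mult_left_mono) auto
  then show ?thesis using sin_aux1[OF a(1)] \<open>y^3 = _\<close> by linarith
qed

lemma one_minus_cos_ge: "0 \<le> (x::real) \<Longrightarrow> x \<le> pi \<Longrightarrow> 1 - cos x \<ge> x^2/18"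
proof -
  assume a: "0 \<le> x" "x \<le> pi"
  have "cos x = cos (2 * (x/2))" by simp
  also have "\<dots> = 1 - 2 * sin (x/2) ^ 2" by (rule cos_double_sin)
  finally have c: "1 - cos x = 2 * sin (x/2) ^ 2" by simp
  have "x/2 \<le> 2" using a pi_less_4 by linarith
  then have s: "sin (x/2) \<ge> x/6" using sin_ge_third[of "x/2"] a by simp
  have "(x/6)^2 \<le> sin (x/2) ^ 2" using s a by (intro power_mono) auto
  then show ?thesis using c by (simp add: power2_eq_square)
qed

definition zeta :: "nat \<Rightarrow> complex" where "zeta d = cis (2 * pi / real d)"

lemma zeta_pow: "zeta d ^ m = cis (2 * pi * real m / real d)"
proof -
  have "zeta d ^ m = cis (real m * (2*pi/real d))" unfolding zeta_def by (rule Complex.DeMoivre)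
  also have "real m * (2*pi/real d) = 2 * pi * real m / real d" by simp
  finally show ?thesis .
qed

lemma zeta_pow_d: "d > 0 \<Longrightarrow> zeta d ^ d = 1"
  by (simp add: zeta_pow)

lemma zeta_pow_eq_1: assumes "d > 0" shows "zeta d ^ m = 1 \<longleftrightarrow> d dvd m"
proof
  assume "d dvd m" then obtain c where "m = d * c" by auto
  then show "zeta d ^ m = 1" by (simp add: power_mult zeta_pow_d assms)
next
  assume h: "zeta d ^ m = 1"
  have "m = d * (m div d) + m mod d" by simp
  then have "zeta d ^ m = zeta d ^ (m mod d)"
    by (metis power_add power_mult zeta_pow_d assms power_one mult_1)
  then have "cis (2 * pi * real (m mod d) / real d) = cis (2 * pi * real 0 / real d)"
    using h by (simp add: zeta_pow)
  moreover have inj: "inj_on (\<lambda>k. cis (2 * pi * real k / real d)) {..<d}"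
    using Complex.bij_betw_roots_unity[OF assms] by (simp add: bij_betw_def)
  ultimately have "m mod d = 0" using assms inj_onD[OF inj, of "m mod d" 0] by simp
  then show "d dvd m" by auto
qed

lemma roots_sum: assumes "d > 0"
  shows "(\<Sum>t<d. (zeta d ^ t) ^ m) = (if d dvd m then of_nat d else 0)"
proof (cases "d dvd m")
  case True
  then have "(zeta d ^ t) ^ m = 1" for t
    by (metis power_mult mult.commute power_one zeta_pow_eq_1[OF assms])
  then show ?thesis using True by simp
next
  case False
  have eq: "(zeta d ^ t) ^ m = (zeta d ^ m) ^ t" for t by (simp add: power_mult[symmetric] mult.commute)
  have ne: "zeta d ^ m \<noteq> 1" using False zeta_pow_eq_1[OF assms] by simp
  have "(zeta d ^ m) ^ d = 1" by (metis power_mult mult.commute power_one zeta_pow_d assms)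
  then show ?thesis using False by (simp add: eq geometric_sum[OF ne])
qed



definition bq :: "real \<Rightarrow> nat \<Rightarrow> nat \<Rightarrow> real" where
  "bq a k b = real (k choose b) * a^b * (1-a)^(k-b)"

definition Pd :: "real \<Rightarrow> nat \<Rightarrow> nat \<Rightarrow> nat \<Rightarrow> real" where
  "Pd a k d r = (\<Sum>b\<le>k. bq a k b * (if d dvd (r+b) then 1 else 0))"

definition psi :: "real \<Rightarrow> nat \<Rightarrow> nat \<Rightarrow> complex" where
  "psi a d t = complex_of_real (1-a) + complex_of_real a * zeta d ^ t"

lemma indicator_fourier: assumes "d > 0"
  shows "complex_of_real (if d dvd m then 1 else 0) = (1 / of_nat d) * (\<Sum>t<d. (zeta d ^ t) ^ m)"
  using assms by (simp add: roots_sum)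

lemma binom_gen: "(\<Sum>b\<le>k. complex_of_real (bq a k b) * z ^ b) = (complex_of_real a * z + complex_of_real (1-a)) ^ k"
proof -
  have "(complex_of_real a * z + complex_of_real (1-a)) ^ k =
        (\<Sum>b\<le>k. of_nat (k choose b) * (complex_of_real a * z) ^ b * complex_of_real (1-a) ^ (k-b))"
    by (rule binomial_ring)
  also have "\<dots> = (\<Sum>b\<le>k. complex_of_real (bq a k b) * z ^ b)"
    by (intro sum.cong refl) (simp add: bq_def power_mult_distrib)
  finally show ?thesis by simp
qed

lemma Pd_fourier: assumes "d > 0"
  shows "complex_of_real (Pd a k d r) = (1 / of_nat d) * (\<Sum>t<d. (zeta d ^ t) ^ r * psi a d t ^ k)"
proof -
  have "complex_of_real (Pd a k d r) =
        (\<Sum>b\<le>k. complex_of_real (bq a k b) * complex_of_real (if d dvd (r+b) then 1 else 0))"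
    by (simp add: Pd_def)
  also have "\<dots> = (\<Sum>b\<le>k. complex_of_real (bq a k b) * ((1 / of_nat d) * (\<Sum>t<d. (zeta d ^ t) ^ (r+b))))"
    using indicator_fourier[OF assms] by simp
  also have "\<dots> = (1 / of_nat d) * (\<Sum>t<d. \<Sum>b\<le>k. (zeta d ^ t) ^ r * (complex_of_real (bq a k b) * (zeta d ^ t) ^ b))"
    by (simp add: sum_distrib_left sum_distrib_right sum.swap[of _ "{..<d}"] power_add mult_ac)
  also have "\<dots> = (1 / of_nat d) * (\<Sum>t<d. (zeta d ^ t) ^ r * psi a d t ^ k)"
    by (simp add: sum_distrib_left[symmetric] binom_gen psi_def add.commute)
  finally show ?thesis .
qed



lemma psi_norm_sq: "cmod (psi a d t) ^ 2 = 1 - 2*a*(1-a)*(1 - cos (2*pi*real t/real d))"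
proof -
  let ?th = "2*pi*real t/real d"
  have z: "zeta d ^ t = cis ?th" by (rule zeta_pow)
  have "cmod (psi a d t) ^ 2 = ((1-a) + a * cos ?th)^2 + (a * sin ?th)^2"
    by (simp add: psi_def z cmod_power2)
  also have "(a * sin ?th)^2 = a^2 * (1 - (cos ?th)^2)" by (simp add: power_mult_distrib sin_squared_eq)
  also have "((1-a) + a * cos ?th)^2 + a^2 * (1 - (cos ?th)^2) = 1 - 2*a*(1-a)*(1 - cos ?th)"
    by (simp add: power2_eq_square algebra_simps)
  finally show ?thesis .
qed

lemma exp_neg_sq_le: "exp (- (u^2)) \<le> 2 / (1 + u)^2" if "u \<ge> 0" for u :: real
proof -
  have h: "1 + u^2 \<le> exp (u^2)" by (rule exp_ge_add_one_self)
  have e: "exp (- (u^2)) = 1 / exp (u^2)" by (simp add: exp_minus divide_inverse)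
  have pos: "(1::real) + u^2 > 0" by (simp add: add_pos_nonneg)
  have 1: "exp (- (u^2)) \<le> 1 / (1 + u^2)"
    unfolding e using pos by (intro divide_left_mono h) auto
  have "(1+u)^2 \<le> 2 * (1 + u^2)"
    using zero_le_square[of "u - 1"] by (simp add: power2_eq_square algebra_simps)
  then have 2: "2 / (2 * (1 + u^2)) \<le> 2 / (1 + u)^2"
    using that by (intro divide_left_mono) (auto intro!: mult_pos_pos add_pos_nonneg)
  have 3: "2 / (2 * (1 + u^2)) = 1 / (1 + u^2)" using pos by (simp add: field_simps)
  show ?thesis using 1 2 3 by (metis order.trans)
qed

lemma psi_bound:
  fixes k :: nat
  assumes a: "0 < a" "a < 1" and d: "d > 0" and t: "1 \<le> t" "t < d"
  defines "b \<equiv> sqrt (2*a*(1-a)*real k) / real d"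
  shows "cmod (psi a d t) ^ k \<le> 2 / (1 + b * real t)^2 + 2 / (1 + b * real (d-t))^2"
proof -
  define s where "s = min t (d-t)"
  define \<beta> where "\<beta> = a*(1-a)"
  have \<beta>: "\<beta> > 0" using a by (simp add: \<beta>_def)
  have s1: "1 \<le> s" and s2: "2 * s \<le> d" using t by (auto simp: s_def)
  have cs: "cos (2*pi*real t/real d) = cos (2*pi*real s/real d)"
  proof (cases "s = t")
    case False
    then have "s = d - t" by (auto simp: s_def)
    then have "2*pi*real s/real d = 2*pi - 2*pi*real t/real d"
      using t d by (simp add: of_nat_diff field_simps)
    then show ?thesis by (simp add: cos_diff)
  qed simp
  have x0: "0 \<le> 2*pi*real s/real d" by simp
  have x1: "2*pi*real s/real d \<le> pi"
  proof -
    have "2 * real s \<le> real d" using s2 by linarith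
    then have "pi * (2 * real s) \<le> pi * real d" by (intro mult_left_mono) auto
    then have "2*pi*real s \<le> pi * real d" by (simp add: mult_ac)
    then show ?thesis using d by (simp add: pos_divide_le_eq)
  qed
  have "(2*pi*real s/real d)^2/18 \<le> 1 - cos (2*pi*real s/real d)"
    by (rule one_minus_cos_ge[OF x0 x1])
  moreover have "2 * (real s/real d)^2 \<le> (2*pi*real s/real d)^2/18"
  proof -
    have "pi^2 \<ge> 3^2" using pi_gt3 by (intro power_mono) auto
    then have p: "1 \<le> pi^2/9" by simp
    have e: "(2*pi*real s/real d)^2/18 = (pi^2/9) * (2 * (real s/real d)^2)"
      by (simp add: power_divide power_mult_distrib)
    have "1 * (2 * (real s/real d)^2) \<le> (pi^2/9) * (2 * (real s/real d)^2)"
      by (intro mult_right_mono p) simp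
    then show ?thesis unfolding e by simp
  qed
  ultimately have cge: "1 - cos (2*pi*real t/real d) \<ge> 2 * (real s/real d)^2" using cs by linarith
  have n2: "cmod (psi a d t) ^ 2 \<le> exp (- (4*\<beta>*(real s/real d)^2))"
  proof -
    have "cmod (psi a d t) ^ 2 \<le> 1 - 4*\<beta>*(real s/real d)^2"
    proof -
      have "2*\<beta>*(2 * (real s/real d)^2) \<le> 2*\<beta>*(1 - cos (2*pi*real t/real d))"
        using \<beta> by (intro mult_left_mono cge) auto
      then show ?thesis unfolding psi_norm_sq \<beta>_def by (simp add: algebra_simps)
    qed
    also have "\<dots> \<le> exp (- (4*\<beta>*(real s/real d)^2))"
      using exp_ge_add_one_self[of "- (4*\<beta>*(real s/real d)^2)"] by simp
    finally show ?thesis .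
  qed
  have n1: "cmod (psi a d t) \<le> exp (- (2*\<beta>*(real s/real d)^2))"
  proof -
    have "exp (- (2*\<beta>*(real s/real d)^2)) ^ 2 = exp (- (4*\<beta>*(real s/real d)^2))"
      by (simp add: power2_eq_square exp_add[symmetric])
    then have "cmod (psi a d t) ^ 2 \<le> exp (- (2*\<beta>*(real s/real d)^2)) ^ 2"
      using n2 by simp
    then show ?thesis by (rule power2_le_imp_le) simp
  qed
  have "cmod (psi a d t) ^ k \<le> exp (- (2*\<beta>*(real s/real d)^2)) ^ k"
    by (intro power_mono n1) simp
  also have "\<dots> = exp (- ((b * real s)^2))"
  proof -
    have nn: "0 \<le> 2*a*(1-a)*real k" using a by simp
    have b2: "b^2 = 2*a*(1-a)*real k / (real d)^2" unfolding b_def using nn by (simp add: power_divide)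
    have "(b * real s)^2 = b^2 * (real s)^2" by (simp add: power_mult_distrib)
    also have "\<dots> = real k * (2*\<beta>*(real s/real d)^2)"
      unfolding b2 \<beta>_def by (simp add: power_divide)
    finally have "(b * real s)^2 = real k * (2*\<beta>*(real s/real d)^2)" .
    then show ?thesis by (simp add: exp_of_nat_mult[symmetric])
  qed
  also have "\<dots> \<le> 2 / (1 + b * real s)^2"
    using a by (intro exp_neg_sq_le) (simp add: b_def)
  also have "\<dots> \<le> 2 / (1 + b * real t)^2 + 2 / (1 + b * real (d-t))^2"
    by (cases "s = t") (auto simp: s_def min_def split: if_splits)
  finally show ?thesis .
qed

lemma tele_aux: assumes "b > 0"
  shows "(\<Sum>t\<in>{1..<Suc N}. 1 / (1 + b * real t)^2) \<le> 1/b - 1/(b * (1 + b * real N))"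
proof (induction N)
  case 0 then show ?case by simp
next
  case (Suc N)
  have "(\<Sum>t\<in>{1..<Suc (Suc N)}. 1 / (1 + b * real t)^2) =
        (\<Sum>t\<in>{1..<Suc N}. 1 / (1 + b * real t)^2) + 1 / (1 + b * real (Suc N))^2"
    by simp
  also have "\<dots> \<le> 1/b - 1/(b * (1 + b * real N)) + 1 / (1 + b * real (Suc N))^2"
    using Suc by simp
  also have "\<dots> \<le> 1/b - 1/(b * (1 + b * real (Suc N)))"
  proof -
    let ?x = "1 + b * real N" let ?y = "1 + b * real (Suc N)"
    have x: "?x > 0" using assms by (simp add: add_pos_nonneg)
    have y: "?y = ?x + b" by (simp add: algebra_simps)
    have gen: "1 / (x * (x+b)) = 1/(b*x) - 1/(b*(x+b))" if "x > 0" for x :: real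
      using that assms by (simp add: divide_simps)
    have "?x \<le> ?y" using assms by simp
    then have "?x * ?y \<le> ?y * ?y" using x by (intro mult_right_mono) auto
    then have xy: "?x * ?y \<le> ?y^2" by (simp add: power2_eq_square)
    have "1 / ?y^2 \<le> 1 / (?x * ?y)"
    proof -
      have "b * real (Suc N) \<ge> 0" using assms by simp
      then have yp: "?y > 0" by linarith
      show ?thesis using x yp by (intro divide_left_mono xy) auto
    qed
    also have "1 / (?x * ?y) = 1/(b * ?x) - 1/(b * ?y)"
      unfolding y by (rule gen[OF x])
    finally show ?thesis by simp
  qed
  finally show ?case .
qed

lemma tele: assumes "b > 0" shows "(\<Sum>t\<in>{1..<d}. 1 / (1 + b * real t)^2) \<le> 1/b"
proof (cases d)
  case 0 then show ?thesis using assms by simp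
next
  case (Suc N)
  have "0 \<le> 1/(b * (1 + b * real N))" using assms by simp
  then show ?thesis using tele_aux[OF assms, of N] unfolding Suc by linarith
qed

lemma sum_rev_1: "(\<Sum>t\<in>{1..<d::nat}. f (d - t)) = (\<Sum>t\<in>{1..<d}. (f t :: real))"
  by (rule sum.reindex_bij_witness[of _ "\<lambda>t. d - t" "\<lambda>t. d - t"]) auto

lemma Pd_diff:
  assumes a: "0 < a" "a < 1" and d: "d > 0" and k: "k > 0"
  shows "\<bar>Pd a k d r - Pd a k d r'\<bar> \<le> 8 / sqrt (2*a*(1-a)*real k)"
proof -
  define b where "b = sqrt (2*a*(1-a)*real k) / real d"
  have b: "b > 0" using a d k by (simp add: b_def)
  define F where "F t = ((zeta d ^ t) ^ r - (zeta d ^ t) ^ r') * psi a d t ^ k" for t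
  have "complex_of_real (Pd a k d r - Pd a k d r') = complex_of_real (Pd a k d r) - complex_of_real (Pd a k d r')"
    by simp
  also have "\<dots> = (1 / of_nat d) * ((\<Sum>t<d. (zeta d ^ t) ^ r * psi a d t ^ k) - (\<Sum>t<d. (zeta d ^ t) ^ r' * psi a d t ^ k))"
    unfolding Pd_fourier[OF d] by (simp add: right_diff_distrib)
  also have "(\<Sum>t<d. (zeta d ^ t) ^ r * psi a d t ^ k) - (\<Sum>t<d. (zeta d ^ t) ^ r' * psi a d t ^ k) = (\<Sum>t<d. F t)"
    unfolding F_def sum_subtractf[symmetric] by (simp add: left_diff_distrib)
  also have "(\<Sum>t<d. F t) = (\<Sum>t\<in>{1..<d}. F t)"
  proof -
    have "{..<d} = insert 0 {1..<d}" using d by auto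
    then show ?thesis by (simp add: F_def)
  qed
  finally have eq: "complex_of_real (Pd a k d r - Pd a k d r') = (1 / of_nat d) * (\<Sum>t\<in>{1..<d}. F t)" .
  have Fb: "norm (F t) \<le> 2 * (2 / (1 + b * real t)^2 + 2 / (1 + b * real (d-t))^2)" if "t \<in> {1..<d}" for t
  proof -
    have "norm ((zeta d ^ t) ^ r - (zeta d ^ t) ^ r') \<le> norm ((zeta d ^ t) ^ r) + norm ((zeta d ^ t) ^ r')"
      by (rule norm_triangle_ineq4)
    also have "\<dots> = 2" by (simp add: zeta_pow norm_power)
    finally have 1: "norm ((zeta d ^ t) ^ r - (zeta d ^ t) ^ r') \<le> 2" .
    have 2: "norm (psi a d t ^ k) \<le> 2 / (1 + b * real t)^2 + 2 / (1 + b * real (d-t))^2"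
      using psi_bound[OF a d, of t k] that by (simp add: b_def norm_power)
    show ?thesis unfolding F_def norm_mult using 1 2 by (intro mult_mono) auto
  qed
  have "\<bar>Pd a k d r - Pd a k d r'\<bar> = norm (complex_of_real (Pd a k d r - Pd a k d r'))"
    by (simp only: norm_of_real)
  also have "\<dots> = (1 / real d) * norm (\<Sum>t\<in>{1..<d}. F t)" unfolding eq norm_mult by (simp add: norm_divide)
  also have "\<dots> \<le> (1 / real d) * (\<Sum>t\<in>{1..<d}. 2 * (2 / (1 + b * real t)^2 + 2 / (1 + b * real (d-t))^2))"
    by (intro mult_left_mono order.trans[OF norm_sum] sum_mono Fb) auto
  also have "(\<Sum>t\<in>{1..<d}. 2 * (2 / (1 + b * real t)^2 + 2 / (1 + b * real (d-t))^2))
      = 8 * (\<Sum>t\<in>{1..<d}. 1 / (1 + b * real t)^2)"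
  proof -
    define g where "g t = 1 / (1 + b * real t)^2" for t :: nat
    have "(\<Sum>t\<in>{1..<d}. 2 * (2 / (1 + b * real t)^2 + 2 / (1 + b * real (d-t))^2))
         = (\<Sum>t\<in>{1..<d}. 4 * g t + 4 * g (d - t))"
      by (intro sum.cong refl) (simp add: g_def)
    also have "\<dots> = 4 * (\<Sum>t\<in>{1..<d}. g t) + 4 * (\<Sum>t\<in>{1..<d}. g (d - t))"
      by (simp add: sum.distrib sum_distrib_left)
    also have "(\<Sum>t\<in>{1..<d}. g (d - t)) = (\<Sum>t\<in>{1..<d}. g t)" by (rule sum_rev_1)
    finally show ?thesis by (simp add: g_def)
  qed
  also have "(1 / real d) * (8 * (\<Sum>t\<in>{1..<d}. 1 / (1 + b * real t)^2)) \<le> (1 / real d) * (8 * (1/b))"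
    using tele[OF b, of d] by (intro mult_left_mono) auto
  also have "\<dots> = 8 / sqrt (2*a*(1-a)*real k)" using d by (simp add: b_def)
  finally show ?thesis .
qed



definition PF :: "nat \<Rightarrow> nat set" where "PF j = {p. prime p \<and> p dvd j}"

lemma PF_finite: "j > 0 \<Longrightarrow> finite (PF j)"
  by (rule finite_subset[of _ "{..j}"]) (auto simp: PF_def dest: dvd_imp_le)

lemma coprime_PF: assumes "j > 0" shows "coprime x j \<longleftrightarrow> (\<forall>p\<in>PF j. \<not> p dvd x)"
proof
  assume c: "coprime x j"
  show "\<forall>p\<in>PF j. \<not> p dvd x"
  proof
    fix p assume "p \<in> PF j"
    then have p: "prime p" "p dvd j" by (auto simp: PF_def)
    show "\<not> p dvd x"
    proof
      assume "p dvd x"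
      then have "p = 1" using coprime_common_divisor_nat[OF c] p by blast
      then show False using p by simp
    qed
  qed
next
  assume h: "\<forall>p\<in>PF j. \<not> p dvd x"
  show "coprime x j"
  proof (rule ccontr)
    assume "\<not> coprime x j"
    then have "gcd x j \<noteq> 1" by (simp add: coprime_iff_gcd_eq_1)
    then obtain p where p: "prime p" "p dvd gcd x j" using prime_factor_nat by blast
    then have "p \<in> PF j" "p dvd x" by (auto simp: PF_def)
    then show False using h by blast
  qed
qed

lemma prod_primes_dvd:
  assumes "finite S" "\<forall>p\<in>S. prime (p::nat)"
  shows "(\<Prod>S) dvd x \<longleftrightarrow> (\<forall>p\<in>S. p dvd x)"
  using assms
proof (induction S rule: finite_induct)
  case empty then show ?case by simp
next
  case (insert p S)
  have cop: "coprime p (\<Prod>S)"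
    using insert by (intro prod_coprime_right primes_coprime) auto
  have "(\<Prod>(insert p S)) = p * \<Prod>S" using insert by simp
  then show ?case using insert cop
    by (auto intro: divides_mult dest: dvd_mult_left dvd_mult_right)
qed

lemma prod_indicator: "finite S \<Longrightarrow> (\<Prod>p\<in>S. (if P p then 1 else 0 :: real)) = (if \<forall>p\<in>S. P p then 1 else 0)"
  by (induction S rule: finite_induct) auto

lemma coprime_expand: assumes "j > 0"
  shows "(if coprime x j then 1 else 0 :: real) =
         (\<Sum>S\<in>Pow (PF j). (-1) ^ card S * (if (\<Prod>S) dvd x then 1 else 0))"
proof -
  have fin: "finite (PF j)" using PF_finite[OF assms] .
  have "(if coprime x j then 1 else 0 :: real) = (\<Prod>p\<in>PF j. (- (if p dvd x then 1 else 0)) + 1)"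
  proof -
    have "(\<Prod>p\<in>PF j. (- (if p dvd x then 1 else 0)) + (1::real)) = (\<Prod>p\<in>PF j. (if \<not> p dvd x then 1 else 0))"
      by (intro prod.cong) auto
    also have "\<dots> = (if \<forall>p\<in>PF j. \<not> p dvd x then 1 else 0)" by (rule prod_indicator[OF fin])
    finally show ?thesis using coprime_PF[OF assms] by simp
  qed
  also have "\<dots> = (\<Sum>S\<in>Pow (PF j). (\<Prod>p\<in>S. - (if p dvd x then 1 else 0)) * (\<Prod>p\<in>PF j - S. 1))"
    by (rule prod_add[OF fin])
  also have "\<dots> = (\<Sum>S\<in>Pow (PF j). (-1) ^ card S * (if (\<Prod>S) dvd x then 1 else 0))"
  proof (intro sum.cong refl)
    fix S assume S: "S \<in> Pow (PF j)"
    then have finS: "finite S" using fin finite_subset by auto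
    have pr: "\<forall>p\<in>S. prime p" using S by (auto simp: PF_def)
    have "(\<Prod>p\<in>S. - (if p dvd x then 1 else 0 :: real)) = (\<Prod>p\<in>S. (-1) * (if p dvd x then 1 else 0))"
      by simp
    also have "\<dots> = (-1) ^ card S * (\<Prod>p\<in>S. (if p dvd x then 1 else 0))"
      by (subst prod.distrib) (simp only: prod_constant)
    also have "(\<Prod>p\<in>S. (if p dvd x then 1 else 0 :: real)) = (if (\<Prod>S) dvd x then 1 else 0)"
      using prod_indicator[OF finS] prod_primes_dvd[OF finS pr] by simp
    finally show "(\<Prod>p\<in>S. - (if p dvd x then 1 else 0)) * (\<Prod>p\<in>PF j - S. 1) =
                  (-1) ^ card S * (if (\<Prod>S) dvd x then 1 else (0::real))" by simp
  qed
  finally show ?thesis .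
qed

lemma card_Pow_PF_le: assumes "j > 0" shows "card (Pow (PF j)) \<le> card {d. d dvd j}"
proof (rule card_inj_on_le[of "\<lambda>S. \<Prod>S"])
  have fin: "finite (PF j)" using PF_finite[OF assms] .
  show "inj_on (\<lambda>S. \<Prod>S) (Pow (PF j))"
  proof (rule inj_onI)
    fix S T assume S: "S \<in> Pow (PF j)" and T: "T \<in> Pow (PF j)" and eq: "\<Prod>S = \<Prod>T"
    have finS: "finite S" and finT: "finite T" using S T fin finite_subset by auto
    have prS: "\<forall>p\<in>S. prime p" and prT: "\<forall>p\<in>T. prime p" using S T by (auto simp: PF_def)
    have sub: "A \<subseteq> B" if "finite A" "finite B" "\<forall>p\<in>A. prime p" "\<forall>p\<in>B. prime p" "\<Prod>A = \<Prod>B" for A B :: "nat set"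
    proof
      fix p assume p: "p \<in> A"
      then have "p dvd \<Prod>B" using that by (metis dvd_prod_eqI dvd_refl)
      moreover have pp: "prime p" using that(3) p by blast
      ultimately have "\<exists>q\<in>B. p dvd q" using prime_dvd_prod_iff[of B p id] that(2) by simp
      then obtain q where "q \<in> B" "p dvd q" by blast
      then show "p \<in> B" using primes_dvd_imp_eq[of p q] that p by auto
    qed
    show "S = T" using sub[OF finS finT prS prT eq] sub[OF finT finS prT prS eq[symmetric]] by auto
  qed
  show "(\<lambda>S. \<Prod>S) ` Pow (PF j) \<subseteq> {d. d dvd j}"
  proof
    fix d assume "d \<in> (\<lambda>S. \<Prod>S) ` Pow (PF j)"
    then obtain S where S: "S \<in> Pow (PF j)" "d = \<Prod>S" by auto
    have finS: "finite S" using S fin finite_subset by auto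
    have pr: "\<forall>p\<in>S. prime p" using S by (auto simp: PF_def)
    show "d \<in> {d. d dvd j}" using prod_primes_dvd[OF finS pr, of j] S by (auto simp: PF_def)
  qed
  show "finite {d. d dvd j}" using assms by (simp add: finite_divisors_nat)
qed



definition V :: "nat \<Rightarrow> nat \<Rightarrow> real" where "V j x = (if coprime x j then 1 else 0)"
definition H :: "real \<Rightarrow> nat \<Rightarrow> nat \<Rightarrow> nat \<Rightarrow> real" where
  "H a k j r = (\<Sum>b\<le>k. bq a k b * V j (r+b))"

lemma H_expand: assumes "j > 0"
  shows "H a k j r = (\<Sum>S\<in>Pow (PF j). (-1) ^ card S * Pd a k (\<Prod>S) r)"
proof -
  have "H a k j r = (\<Sum>b\<le>k. bq a k b * (\<Sum>S\<in>Pow (PF j). (-1) ^ card S * (if (\<Prod>S) dvd (r+b) then 1 else 0)))"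
    unfolding H_def V_def using coprime_expand[OF assms] by simp
  also have "\<dots> = (\<Sum>S\<in>Pow (PF j). (-1) ^ card S * Pd a k (\<Prod>S) r)"
    unfolding Pd_def by (simp add: sum_distrib_left sum.swap[of _ "Pow (PF j)"] mult_ac)
  finally show ?thesis .
qed

lemma H_osc: assumes a: "0 < a" "a < 1" and j: "j > 0" and k: "k > 0"
  shows "\<bar>H a k j r - H a k j r'\<bar> \<le> real (card {d. d dvd j}) * (8 / sqrt (2*a*(1-a)*real k))"
proof -
  have fin: "finite (PF j)" using PF_finite[OF j] .
  let ?B = "8 / sqrt (2*a*(1-a)*real k)"
  have "H a k j r - H a k j r' = (\<Sum>S\<in>Pow (PF j). (-1) ^ card S * (Pd a k (\<Prod>S) r - Pd a k (\<Prod>S) r'))"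
    unfolding H_expand[OF j] by (simp add: sum_subtractf[symmetric] right_diff_distrib)
  also have "\<bar>\<dots>\<bar> \<le> (\<Sum>S\<in>Pow (PF j). \<bar>(-1) ^ card S * (Pd a k (\<Prod>S) r - Pd a k (\<Prod>S) r')\<bar>)"
    by (rule sum_abs)
  also have "\<dots> \<le> (\<Sum>S\<in>Pow (PF j). ?B)"
  proof (intro sum_mono)
    fix S assume S: "S \<in> Pow (PF j)"
    have "\<forall>p\<in>S. prime p" using S by (auto simp: PF_def)
    then have "\<Prod>S > (0::nat)" using S fin finite_subset
      by (intro prod_pos) (auto intro: prime_gt_0_nat)
    then show "\<bar>(-1) ^ card S * (Pd a k (\<Prod>S) r - Pd a k (\<Prod>S) r')\<bar> \<le> ?B"
      using Pd_diff[OF a _ k, of "\<Prod>S" r r'] by (simp add: abs_mult)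
  qed
  also have "\<dots> = real (card (Pow (PF j))) * ?B" by simp
  also have "\<dots> \<le> real (card {d. d dvd j}) * ?B"
    using card_Pow_PF_le[OF j] a by (intro mult_right_mono) auto
  finally show ?thesis .
qed



definition cnt :: "(nat \<Rightarrow> bool) \<Rightarrow> nat \<Rightarrow> nat" where "cnt \<omega> m = card {l. l < m \<and> \<omega> l}"

lemma cnt_mono: "i \<le> j \<Longrightarrow> cnt \<omega> i \<le> cnt \<omega> j"
  unfolding cnt_def by (intro card_mono) auto

lemma cnt_le: "cnt \<omega> i \<le> i"
proof -
  have "cnt \<omega> i \<le> card {..<i}" unfolding cnt_def by (intro card_mono) auto
  then show ?thesis by simp
qed

lemma vis_ind_eq: "vis_ind \<omega> i = V i (cnt \<omega> i)"
proof -
  have A: "{j. j < i} = {j. j < i \<and> \<omega> j} \<union> {j. j < i \<and> \<not> \<omega> j}" by auto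
  have "card {j. j < i} = card {j. j < i \<and> \<omega> j} + card {j. j < i \<and> \<not> \<omega> j}"
    by (subst A, rule card_Un_disjoint) auto
  then have c: "card {j. j < i \<and> \<not> \<omega> j} = i - cnt \<omega> i" by (simp add: cnt_def)
  have "gcd (cnt \<omega> i) (i - cnt \<omega> i) = gcd (cnt \<omega> i) i"
    using gcd_diff1_nat[OF cnt_le[of \<omega> i]] by (simp add: gcd.commute)
  then show ?thesis
    by (simp add: vis_ind_def visible_def walk_pos_def c V_def cnt_def[symmetric] coprime_iff_gcd_eq_1)
qed

lemma walk_dist:
  assumes ij: "i \<le> j" "j \<le> n" and p: "0 \<le> p" "p \<le> 1"
  shows "map_pmf (\<lambda>\<omega>. (cnt \<omega> i, cnt \<omega> j - cnt \<omega> i)) (walk_steps p n) =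
         pair_pmf (binomial_pmf i p) (binomial_pmf (j-i) p)"
proof -
  let ?B = "\<lambda>_::nat. bernoulli_pmf p"
  define F where "F = (\<lambda>\<omega>. (cnt \<omega> i, cnt \<omega> j - cnt \<omega> i))"
  define rj where "rj = (\<lambda>f x. if x \<in> {..<j} then f x else False)"
  have Fr: "F (rj f) = F f" for f
  proof -
    have "{l. l < m \<and> rj f l} = {l. l < m \<and> f l}" if "m \<le> j" for m
      using that by (auto simp: rj_def)
    then show ?thesis using ij by (simp add: F_def cnt_def)
  qed
  have "map_pmf F (walk_steps p n) = map_pmf F (map_pmf rj (Pi_pmf {..<n} False ?B))"
    by (simp add: walk_steps_def pmf.map_comp o_def Fr)
  also have "map_pmf rj (Pi_pmf {..<n} False ?B) = Pi_pmf {..<j} False ?B"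
    unfolding rj_def using ij by (intro Pi_pmf_subset[symmetric]) auto
  also have "{..<j} = {..<i} \<union> {i..<j}" using ij by auto
  also have "Pi_pmf ({..<i} \<union> {i..<j}) False ?B =
       map_pmf (\<lambda>(f,g) x. if x \<in> {..<i} then f x else g x) (pair_pmf (Pi_pmf {..<i} False ?B) (Pi_pmf {i..<j} False ?B))"
    by (rule Pi_pmf_union) auto
  also have "map_pmf F \<dots> = map_pmf (\<lambda>(f,g). (card {x\<in>{..<i}. f x}, card {x\<in>{i..<j}. g x}))
               (pair_pmf (Pi_pmf {..<i} False ?B) (Pi_pmf {i..<j} False ?B))"
    unfolding pmf.map_comp
  proof (intro map_pmf_cong refl)
    fix fg assume "fg \<in> set_pmf (pair_pmf (Pi_pmf {..<i} False ?B) (Pi_pmf {i..<j} False ?B))"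
    obtain f g where fg: "fg = (f, g)" by fastforce
    let ?m = "\<lambda>x. if x \<in> {..<i} then f x else g x"
    have 1: "{l. l < i \<and> ?m l} = {x\<in>{..<i}. f x}" by auto
    have 2: "{l. l < j \<and> ?m l} = {x\<in>{..<i}. f x} \<union> {x\<in>{i..<j}. g x}" using ij by auto
    have 3: "card ({x\<in>{..<i}. f x} \<union> {x\<in>{i..<j}. g x}) = card {x\<in>{..<i}. f x} + card {x\<in>{i..<j}. g x}"
      by (rule card_Un_disjoint) auto
    show "(F \<circ> (\<lambda>(f,g) x. if x \<in> {..<i} then f x else g x)) fg =
          (\<lambda>(f,g). (card {x\<in>{..<i}. f x}, card {x\<in>{i..<j}. g x})) fg"
    proof -
      have c1: "cnt ?m i = card {x\<in>{..<i}. f x}" by (simp only: cnt_def 1)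
      have c2: "cnt ?m j = card {x\<in>{..<i}. f x} + card {x\<in>{i..<j}. g x}" by (simp only: cnt_def 2 3)
      have "(F \<circ> (\<lambda>(f,g) x. if x \<in> {..<i} then f x else g x)) (f,g) = F ?m" by simp
      also have "F ?m = (card {x\<in>{..<i}. f x}, card {x\<in>{i..<j}. g x})"
        by (simp only: F_def c1 c2 add_diff_cancel_left')
      finally show ?thesis unfolding fg by simp
    qed
  qed
  also have "\<dots> = pair_pmf (map_pmf (\<lambda>f. card {x\<in>{..<i}. f x}) (Pi_pmf {..<i} False ?B))
                          (map_pmf (\<lambda>g. card {x\<in>{i..<j}. g x}) (Pi_pmf {i..<j} False ?B))"
    by (rule map_pair)
  also have "\<dots> = pair_pmf (binomial_pmf i p) (binomial_pmf (j-i) p)"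
  proof -
    have b1: "binomial_pmf i p = map_pmf (\<lambda>f. card {x\<in>{..<i}. f x}) (Pi_pmf {..<i} False ?B)"
      by (rule binomial_pmf_altdef') (use p in auto)
    have b2: "binomial_pmf (j-i) p = map_pmf (\<lambda>f. card {x\<in>{i..<j}. f x}) (Pi_pmf {i..<j} False ?B)"
      by (rule binomial_pmf_altdef') (use p in auto)
    show ?thesis by (simp only: b1 b2)
  qed
  finally show ?thesis unfolding F_def .
qed

lemma sum_bq: "0 \<le> a \<Longrightarrow> a \<le> 1 \<Longrightarrow> (\<Sum>b\<le>k. bq a k b) = 1"
  using binomial_ring[of a "1-a" k] by (simp add: bq_def)

lemma bq_nonneg: "0 \<le> a \<Longrightarrow> a \<le> 1 \<Longrightarrow> bq a k b \<ge> 0"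
  by (simp add: bq_def)

lemma walk_expect:
  assumes ij: "i \<le> j" "j \<le> n" and p: "0 \<le> p" "p \<le> 1"
  shows "measure_pmf.expectation (walk_steps p n) (\<lambda>\<omega>. G (cnt \<omega> i) (cnt \<omega> j - cnt \<omega> i)) =
         (\<Sum>a\<le>i. \<Sum>b\<le>j-i. bq p i a * bq p (j-i) b * G a b)"
proof -
  have "measure_pmf.expectation (walk_steps p n) (\<lambda>\<omega>. G (cnt \<omega> i) (cnt \<omega> j - cnt \<omega> i)) =
        measure_pmf.expectation (map_pmf (\<lambda>\<omega>. (cnt \<omega> i, cnt \<omega> j - cnt \<omega> i)) (walk_steps p n)) (\<lambda>(a,b). G a b)"
    by simp
  also have "\<dots> = measure_pmf.expectation (pair_pmf (binomial_pmf i p) (binomial_pmf (j-i) p)) (\<lambda>(a,b). G a b)"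
    by (simp only: walk_dist[OF ij p])
  also have "\<dots> = (\<Sum>ab\<in>{..i}\<times>{..j-i}. pmf (pair_pmf (binomial_pmf i p) (binomial_pmf (j-i) p)) ab *\<^sub>R (\<lambda>(a,b). G a b) ab)"
    using p by (intro integral_measure_pmf) (auto simp: set_pmf_binomial_eq split: if_splits)
  also have "\<dots> = (\<Sum>a\<le>i. \<Sum>b\<le>j-i. bq p i a * bq p (j-i) b * G a b)"
    using p by (simp add: sum.cartesian_product' pmf_pair bq_def)
  finally show ?thesis .
qed



lemma cov_abs:
  fixes P Q f :: "nat \<Rightarrow> real" and G :: "nat \<Rightarrow> nat \<Rightarrow> real"
  assumes fin: "finite A" "finite B"
    and P: "\<And>a. a \<in> A \<Longrightarrow> P a \<ge> 0" "sum P A = 1"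
    and Q: "sum Q B = 1"
    and f: "\<And>a. a \<in> A \<Longrightarrow> 0 \<le> f a \<and> f a \<le> 1"
    and osc: "\<And>a a'. a \<in> A \<Longrightarrow> a' \<in> A \<Longrightarrow> \<bar>(\<Sum>b\<in>B. Q b * G a b) - (\<Sum>b\<in>B. Q b * G a' b)\<bar> \<le> \<epsilon>"
  shows "\<bar>(\<Sum>a\<in>A. \<Sum>b\<in>B. P a * Q b * (f a * G a b)) -
          (\<Sum>a\<in>A. \<Sum>b\<in>B. P a * Q b * f a) * (\<Sum>a\<in>A. \<Sum>b\<in>B. P a * Q b * G a b)\<bar> \<le> \<epsilon>"
proof -
  define h where "h a = (\<Sum>b\<in>B. Q b * G a b)" for a
  define m where "m = (\<Sum>a\<in>A. P a * h a)"
  have E1: "(\<Sum>a\<in>A. \<Sum>b\<in>B. P a * Q b * (f a * G a b)) = (\<Sum>a\<in>A. P a * f a * h a)"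
    unfolding h_def by (simp add: sum_distrib_left mult_ac)
  have E2: "(\<Sum>a\<in>A. \<Sum>b\<in>B. P a * Q b * f a) = (\<Sum>a\<in>A. P a * f a)"
  proof -
    have "(\<Sum>a\<in>A. \<Sum>b\<in>B. P a * Q b * f a) = (\<Sum>a\<in>A. P a * f a * (\<Sum>b\<in>B. Q b))"
      by (simp add: sum_distrib_left mult_ac)
    then show ?thesis using Q by simp
  qed
  have E3: "(\<Sum>a\<in>A. \<Sum>b\<in>B. P a * Q b * G a b) = m"
    unfolding m_def h_def by (simp add: sum_distrib_left mult_ac)
  have dev: "\<bar>h a - m\<bar> \<le> \<epsilon>" if a: "a \<in> A" for a
  proof -
    have "h a = (\<Sum>a'\<in>A. P a' * h a)" using P(2) by (simp add: sum_distrib_right[symmetric])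
    moreover have "(\<Sum>a'\<in>A. P a' * (h a - h a')) = (\<Sum>a'\<in>A. P a' * h a) - m"
      unfolding m_def by (simp add: right_diff_distrib sum_subtractf)
    ultimately have "h a - m = (\<Sum>a'\<in>A. P a' * (h a - h a'))" by linarith
    then have "\<bar>h a - m\<bar> \<le> (\<Sum>a'\<in>A. \<bar>P a' * (h a - h a')\<bar>)" by (simp add: sum_abs)
    also have "\<dots> \<le> (\<Sum>a'\<in>A. P a' * \<epsilon>)"
      using P(1) osc[OF a] unfolding h_def by (intro sum_mono) (simp add: abs_mult mult_left_mono)
    also have "\<dots> = \<epsilon>" using P(2) by (simp add: sum_distrib_right[symmetric])
    finally show ?thesis .
  qed
  have "(\<Sum>a\<in>A. P a * f a * h a) - (\<Sum>a\<in>A. P a * f a) * m = (\<Sum>a\<in>A. P a * f a * (h a - m))"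
    by (simp add: sum_distrib_right sum_subtractf[symmetric] right_diff_distrib)
  also have "\<bar>\<dots>\<bar> \<le> (\<Sum>a\<in>A. \<bar>P a * f a * (h a - m)\<bar>)" by (rule sum_abs)
  also have "\<dots> \<le> (\<Sum>a\<in>A. P a * \<epsilon>)"
  proof (intro sum_mono)
    fix a assume a: "a \<in> A"
    have "\<bar>P a * f a * (h a - m)\<bar> = P a * f a * \<bar>h a - m\<bar>" using P(1)[OF a] f[OF a] by (simp add: abs_mult)
    also have "\<dots> \<le> P a * 1 * \<epsilon>" using P(1)[OF a] f[OF a] dev[OF a]
      by (intro mult_mono) (auto intro: mult_mono)
    finally show "\<bar>P a * f a * (h a - m)\<bar> \<le> P a * \<epsilon>" by simp
  qed
  also have "\<dots> = \<epsilon>" using P(2) by (simp add: sum_distrib_right[symmetric])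
  finally show ?thesis unfolding E1 E2 E3 .
qed

definition Cov :: "real \<Rightarrow> nat \<Rightarrow> nat \<Rightarrow> nat \<Rightarrow> real" where
  "Cov p n i j = measure_pmf.expectation (walk_steps p n) (\<lambda>\<omega>. vis_ind \<omega> i * vis_ind \<omega> j)
     - measure_pmf.expectation (walk_steps p n) (\<lambda>\<omega>. vis_ind \<omega> i) * measure_pmf.expectation (walk_steps p n) (\<lambda>\<omega>. vis_ind \<omega> j)"

lemma vis_ind_j: "i \<le> j \<Longrightarrow> vis_ind \<omega> j = V j (cnt \<omega> i + (cnt \<omega> j - cnt \<omega> i))"
  using cnt_mono[of i j \<omega>] by (simp add: vis_ind_eq)

lemma Cov_bound:
  assumes p: "0 < p" "p < 1" and ij: "i < j" "j \<le> n"
  shows "\<bar>Cov p n i j\<bar> \<le> real (card {d. d dvd j}) * (8 / sqrt (2*p*(1-p)*real (j-i)))"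
proof -
  have ij': "i \<le> j" using ij by simp
  have p': "0 \<le> p" "p \<le> 1" using p by auto
  let ?M = "walk_steps p n"
  have e1: "measure_pmf.expectation ?M (\<lambda>\<omega>. vis_ind \<omega> i * vis_ind \<omega> j) =
      (\<Sum>a\<le>i. \<Sum>b\<le>j-i. bq p i a * bq p (j-i) b * (V i a * V j (a+b)))"
    using walk_expect[OF ij' ij(2) p', of "\<lambda>a b. V i a * V j (a+b)"] by (simp add: vis_ind_j[OF ij'] vis_ind_eq[of _ i])
  have e2: "measure_pmf.expectation ?M (\<lambda>\<omega>. vis_ind \<omega> i) =
      (\<Sum>a\<le>i. \<Sum>b\<le>j-i. bq p i a * bq p (j-i) b * V i a)"
    using walk_expect[OF ij' ij(2) p', of "\<lambda>a b. V i a"] by (simp add: vis_ind_eq[of _ i])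
  have e3: "measure_pmf.expectation ?M (\<lambda>\<omega>. vis_ind \<omega> j) =
      (\<Sum>a\<le>i. \<Sum>b\<le>j-i. bq p i a * bq p (j-i) b * V j (a+b))"
    using walk_expect[OF ij' ij(2) p', of "\<lambda>a b. V j (a+b)"] by (simp add: vis_ind_j[OF ij'])
  have jpos: "j > 0" and kpos: "j - i > 0" using ij by auto
  show ?thesis unfolding Cov_def e1 e2 e3
  proof (rule cov_abs)
    show "finite {..i}" "finite {..j-i}" by auto
    show "\<And>a. a \<in> {..i} \<Longrightarrow> bq p i a \<ge> 0" using bq_nonneg p' by auto
    show "sum (bq p i) {..i} = 1" using sum_bq p' by auto
    show "sum (bq p (j-i)) {..j-i} = 1" using sum_bq p' by auto
    show "\<And>a. a \<in> {..i} \<Longrightarrow> 0 \<le> V i a \<and> V i a \<le> 1" by (simp add: V_def)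
    fix a a' assume "a \<in> {..i}" "a' \<in> {..i}"
    show "\<bar>(\<Sum>b\<le>j-i. bq p (j-i) b * V j (a+b)) - (\<Sum>b\<le>j-i. bq p (j-i) b * V j (a'+b))\<bar>
          \<le> real (card {d. d dvd j}) * (8 / sqrt (2*p*(1-p)*real (j-i)))"
      using H_osc[OF p jpos kpos, of a a'] by (simp add: H_def)
  qed
qed

lemma Cov_sym: "Cov p n i j = Cov p n j i"
  by (simp add: Cov_def mult.commute)

lemma Cov_le_1: "\<bar>Cov p n i j\<bar> \<le> 1"
proof -
  let ?M = "walk_steps p n"
  have b01: "0 \<le> measure_pmf.expectation ?M f \<and> measure_pmf.expectation ?M f \<le> 1"
    if "\<And>\<omega>. 0 \<le> f \<omega> \<and> f \<omega> \<le> (1::real)" for f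
  proof
    show "0 \<le> measure_pmf.expectation ?M f" using that by (intro integral_nonneg_AE) auto
    have "measure_pmf.expectation ?M f \<le> measure_pmf.expectation ?M (\<lambda>_. 1)"
      using that by (intro integral_mono_AE' measure_pmf.integrable_const) auto
    then show "measure_pmf.expectation ?M f \<le> 1" by simp
  qed
  have v: "0 \<le> vis_ind \<omega> i \<and> vis_ind \<omega> i \<le> 1" for \<omega> i by (simp add: vis_ind_def)
  have A: "0 \<le> measure_pmf.expectation ?M (\<lambda>\<omega>. vis_ind \<omega> i * vis_ind \<omega> j) \<and>
           measure_pmf.expectation ?M (\<lambda>\<omega>. vis_ind \<omega> i * vis_ind \<omega> j) \<le> 1"
    by (rule b01) (simp add: vis_ind_def)
  have B: "0 \<le> measure_pmf.expectation ?M (\<lambda>\<omega>. vis_ind \<omega> i) \<and> measure_pmf.expectation ?M (\<lambda>\<omega>. vis_ind \<omega> i) \<le> 1"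
    by (rule b01) (rule v)
  have C: "0 \<le> measure_pmf.expectation ?M (\<lambda>\<omega>. vis_ind \<omega> j) \<and> measure_pmf.expectation ?M (\<lambda>\<omega>. vis_ind \<omega> j) \<le> 1"
    by (rule b01) (rule v)
  have "0 \<le> measure_pmf.expectation ?M (\<lambda>\<omega>. vis_ind \<omega> i) * measure_pmf.expectation ?M (\<lambda>\<omega>. vis_ind \<omega> j)"
    using B C by simp
  moreover have "measure_pmf.expectation ?M (\<lambda>\<omega>. vis_ind \<omega> i) * measure_pmf.expectation ?M (\<lambda>\<omega>. vis_ind \<omega> j) \<le> 1"
    using B C by (metis mult_le_one)
  ultimately show ?thesis using A unfolding Cov_def by linarith
qed



lemma finite_walk: "finite (set_pmf (walk_steps p n))"
  unfolding walk_steps_def by (subst set_Pi_pmf) auto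

lemma integrable_walk: "integrable (measure_pmf (walk_steps p n)) (f :: _ \<Rightarrow> real)"
  by (rule integrable_measure_pmf_finite[OF finite_walk])

lemma variance_decomp:
  fixes I :: "nat set" assumes fin: "finite I"
  shows "measure_pmf.variance (walk_steps p n) (\<lambda>\<omega>. \<Sum>i\<in>I. vis_ind \<omega> i) = (\<Sum>i\<in>I. \<Sum>j\<in>I. Cov p n i j)"
proof -
  let ?M = "walk_steps p n"
  let ?E = "measure_pmf.expectation ?M"
  have v: "measure_pmf.variance ?M (\<lambda>\<omega>. \<Sum>i\<in>I. vis_ind \<omega> i) =
        ?E (\<lambda>\<omega>. (\<Sum>i\<in>I. vis_ind \<omega> i)^2) - (?E (\<lambda>\<omega>. \<Sum>i\<in>I. vis_ind \<omega> i))^2"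
    by (rule measure_pmf.variance_eq) (rule integrable_walk)+
  have a: "?E (\<lambda>\<omega>. (\<Sum>i\<in>I. vis_ind \<omega> i)^2) = (\<Sum>i\<in>I. \<Sum>j\<in>I. ?E (\<lambda>\<omega>. vis_ind \<omega> i * vis_ind \<omega> j))"
    by (simp add: power2_eq_square sum_product integral_sum integrable_walk)
  have b: "?E (\<lambda>\<omega>. \<Sum>i\<in>I. vis_ind \<omega> i) = (\<Sum>i\<in>I. ?E (\<lambda>\<omega>. vis_ind \<omega> i))"
    by (simp add: integral_sum integrable_walk)
  have c: "(\<Sum>i\<in>I. ?E (\<lambda>\<omega>. vis_ind \<omega> i))^2 = (\<Sum>i\<in>I. \<Sum>j\<in>I. ?E (\<lambda>\<omega>. vis_ind \<omega> i) * ?E (\<lambda>\<omega>. vis_ind \<omega> j))"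
    by (simp add: power2_eq_square sum_product)
  note v
  also have "?E (\<lambda>\<omega>. (\<Sum>i\<in>I. vis_ind \<omega> i)^2) - (?E (\<lambda>\<omega>. \<Sum>i\<in>I. vis_ind \<omega> i))^2
      = (\<Sum>i\<in>I. \<Sum>j\<in>I. ?E (\<lambda>\<omega>. vis_ind \<omega> i * vis_ind \<omega> j)) - (\<Sum>i\<in>I. \<Sum>j\<in>I. ?E (\<lambda>\<omega>. vis_ind \<omega> i) * ?E (\<lambda>\<omega>. vis_ind \<omega> j))"
    by (simp only: a b c)
  also have "\<dots> = (\<Sum>i\<in>I. \<Sum>j\<in>I. Cov p n i j)" by (simp add: Cov_def sum_subtractf)
  finally show ?thesis .
qed

lemma sum_inv_sqrt_aux: "(\<Sum>t\<in>{1..<Suc m}. 1 / sqrt (real t)) \<le> 2 * sqrt (real m)"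
proof (induction m)
  case 0 then show ?case by simp
next
  case (Suc m)
  let ?s = "sqrt (real m)" let ?t = "sqrt (real (Suc m))"
  have t: "?t > 0" by simp
  have st: "?s \<le> ?t" by simp
  have "?t^2 - ?s^2 = 1" by simp
  then have h: "(?t - ?s) * (?t + ?s) = 1" by (simp add: power2_eq_square algebra_simps)
  have "1 = (?t - ?s) * (?t + ?s)" using h by simp
  also have "\<dots> \<le> (?t - ?s) * (2 * ?t)" using st by (intro mult_left_mono) auto
  finally have "1 \<le> (?t - ?s) * (2 * ?t)" .
  then have "1 \<le> (2 * (?t - ?s)) * ?t" by (metis mult.commute mult.left_commute)
  then have key: "1 / ?t \<le> 2 * (?t - ?s)" using t by (simp add: divide_le_eq)
  have "(\<Sum>t\<in>{1..<Suc (Suc m)}. 1 / sqrt (real t)) = (\<Sum>t\<in>{1..<Suc m}. 1 / sqrt (real t)) + 1 / ?t"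
    by simp
  also have "\<dots> \<le> 2 * ?s + 1 / ?t" using Suc by simp
  also have "\<dots> \<le> 2 * ?t" using key by simp
  finally show ?case .
qed

lemma sum_inv_sqrt: "(\<Sum>t\<in>{1..<m}. 1 / sqrt (real t)) \<le> 2 * sqrt (real m)"
proof (cases m)
  case 0 then show ?thesis by simp
next
  case (Suc m')
  have "2 * sqrt (real m') \<le> 2 * sqrt (real m)" using Suc by simp
  moreover have "(\<Sum>t\<in>{1..<m}. 1 / sqrt (real t)) \<le> 2 * sqrt (real m')"
    using sum_inv_sqrt_aux[of m'] Suc by simp
  ultimately show ?thesis by linarith
qed

lemma harm_le_ln: "n \<ge> 1 \<Longrightarrow> harm n \<le> 1 + ln (real n)"
proof (induction n rule: dec_induct)
  case base then show ?case by (simp add: harm_def)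
next
  case (step m)
  have m: "real m > 0" using step by simp
  have "ln (real m / real (Suc m)) \<le> real m / real (Suc m) - 1"
    using m by (intro ln_le_minus_one) simp
  also have "\<dots> = - (1 / real (Suc m))" by (simp add: field_simps)
  finally have "1 / real (Suc m) \<le> ln (real (Suc m)) - ln (real m)"
    using m by (simp add: ln_div)
  then show ?case using step by (simp add: harm_Suc inverse_eq_divide)
qed

lemma card_multiples: assumes d: "d > 0" shows "real (card {j\<in>{1..n}. d dvd j}) \<le> real n / real d"
proof -
  have "{j\<in>{1..n}. d dvd j} \<subseteq> (\<lambda>m. d * m) ` {1..n div d}"
  proof
    fix j assume j: "j \<in> {j\<in>{1..n}. d dvd j}"
    then obtain m where m: "j = d * m" by auto
    have "m \<ge> 1" using j m by (cases m) auto
    moreover have "m \<le> n div d"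
    proof -
      have "d * m div d \<le> n div d" using j m by (intro div_le_mono) auto
      then show ?thesis using d by simp
    qed
    ultimately show "j \<in> (\<lambda>m. d * m) ` {1..n div d}" using m by auto
  qed
  then have "card {j\<in>{1..n}. d dvd j} \<le> card ((\<lambda>m. d * m) ` {1..n div d})" by (intro card_mono) auto
  also have "\<dots> \<le> card {1..n div d}" by (rule card_image_le) auto
  also have "\<dots> = n div d" by simp
  finally have "real (card {j\<in>{1..n}. d dvd j}) \<le> real (n div d)" by simp
  also have "\<dots> \<le> real n / real d" by (rule of_nat_div_le_of_nat)
  finally show ?thesis .
qed

lemma divisor_sum: assumes "n \<ge> 1"
  shows "(\<Sum>j=1..n. real (card {d. d dvd j})) \<le> real n * (1 + ln (real n))"
proof -
  have tau: "card {d. d dvd j} = card ({1..n} \<inter> {d. d dvd j})" if "j \<in> {1..n}" for j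
  proof -
    have "{d. d dvd j} = {1..n} \<inter> {d. d dvd j}"
    proof (intro equalityI subsetI)
      fix x assume "x \<in> {d. d dvd j}" then have x: "x dvd j" by simp
      have "x \<noteq> 0" using x that by auto
      moreover have "x \<le> j" using x that by (intro dvd_imp_le) auto
      ultimately show "x \<in> {1..n} \<inter> {d. d dvd j}" using that x by auto
    qed auto
    then show ?thesis by simp
  qed
  have "(\<Sum>j=1..n. real (card {d. d dvd j})) = (\<Sum>j=1..n. \<Sum>d=1..n. if d dvd j then 1 else 0)"
    by (intro sum.cong refl) (simp add: tau sum.If_cases)
  also have "\<dots> = (\<Sum>d=1..n. \<Sum>j=1..n. if d dvd j then 1 else 0)" by (rule sum.swap)
  also have "\<dots> = (\<Sum>d=1..n. real (card {j\<in>{1..n}. d dvd j}))"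
    by (intro sum.cong refl) (simp add: sum.If_cases Int_def conj_commute)
  also have "\<dots> \<le> (\<Sum>d=1..n. real n / real d)"
    by (intro sum_mono card_multiples) auto
  also have "\<dots> = real n * harm n"
    by (simp add: harm_def sum_distrib_left divide_inverse)
  also have "\<dots> \<le> real n * (1 + ln (real n))"
    using harm_le_ln[OF assms] by (intro mult_left_mono) auto
  finally show ?thesis .
qed



lemma main_bound:
  assumes p: "0 < p" "p < 1" and n: "n \<ge> 2"
  defines "K \<equiv> 8 / sqrt (2*p*(1-p))"
  shows "measure_pmf.variance (walk_steps p n) (\<lambda>\<omega>. \<Sum>i=1..n. vis_ind \<omega> i)
           \<le> real n + 4 * K * sqrt (real n) * (real n * (1 + ln (real n)))"
proof -
  define tau where "tau j = real (card {d. d dvd j})" for j :: nat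
  define B where "B i j = (if i < j then tau j * (K / sqrt (real (j - i))) else 0)" for i j :: nat
  have K: "K > 0" using p by (simp add: K_def)
  have tau0: "tau j \<ge> 0" for j by (simp add: tau_def)
  have B0: "B i j \<ge> 0" for i j using K tau0 by (simp add: B_def)
  have cb: "\<bar>Cov p n i j\<bar> \<le> (if i = j then 1 else 0) + B i j + B j i" if "i \<in> {1..n}" "j \<in> {1..n}" for i j
  proof -
    have bnd: "\<bar>Cov p n i j\<bar> \<le> B i j" if "i < j" "j \<le> n" for i j
    proof -
      have "8 / sqrt (2*p*(1-p)*real (j-i)) = K / sqrt (real (j - i))"
        by (simp add: K_def real_sqrt_mult)
      then show ?thesis using Cov_bound[OF p that] that by (simp add: B_def tau_def)
    qed
    consider "i = j" | "i < j" | "j < i" by linarith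
    then show ?thesis
    proof cases
      case 1 then show ?thesis using Cov_le_1[of p n i j] B0[of i j] B0[of j i] by simp
    next
      case 2 then show ?thesis using bnd[of i j] that B0[of j i] by (simp add: B_def)
    next
      case 3 then show ?thesis using bnd[of j i] that B0[of i j] Cov_sym[of p n i j] by (simp add: B_def)
    qed
  qed
  have colsum: "(\<Sum>i=1..n. B i j) \<le> tau j * (K * (2 * sqrt (real n)))" if j: "j \<in> {1..n}" for j
  proof -
    have "(\<Sum>i=1..n. B i j) = (\<Sum>i\<in>{1..n} \<inter> {i. i < j}. tau j * (K / sqrt (real (j - i))))"
      unfolding B_def by (simp add: sum.If_cases)
    also have "{1..n} \<inter> {i. i < j} = {1..<j}" using j by auto
    also have "(\<Sum>i\<in>{1..<j}. tau j * (K / sqrt (real (j - i)))) = tau j * K * (\<Sum>i\<in>{1..<j}. 1 / sqrt (real (j - i)))"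
      by (simp add: sum_distrib_left)
    also have "(\<Sum>i\<in>{1..<j}. 1 / sqrt (real (j - i))) = (\<Sum>t\<in>{1..<j}. 1 / sqrt (real t))"
      by (rule sum_rev_1)
    also have "tau j * K * (\<Sum>t\<in>{1..<j}. 1 / sqrt (real t)) \<le> tau j * K * (2 * sqrt (real j))"
      using tau0 K by (intro mult_left_mono sum_inv_sqrt) auto
    also have "\<dots> \<le> tau j * K * (2 * sqrt (real n))"
      using tau0 K j by (intro mult_left_mono) auto
    finally show ?thesis by (simp add: mult_ac)
  qed
  have "measure_pmf.variance (walk_steps p n) (\<lambda>\<omega>. \<Sum>i=1..n. vis_ind \<omega> i) = (\<Sum>i=1..n. \<Sum>j=1..n. Cov p n i j)"
    by (rule variance_decomp) simp
  also have "\<dots> \<le> (\<Sum>i=1..n. \<Sum>j=1..n. (if i = j then 1 else 0) + B i j + B j i)"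
    by (intro sum_mono) (use cb in fastforce)
  also have "\<dots> = real n + (\<Sum>i=1..n. \<Sum>j=1..n. B i j) + (\<Sum>i=1..n. \<Sum>j=1..n. B j i)"
    by (simp add: sum.distrib sum.If_cases Int_def)
  also have "(\<Sum>i=1..n. \<Sum>j=1..n. B j i) = (\<Sum>i=1..n. \<Sum>j=1..n. B i j)" by (rule sum.swap)
  also have "(\<Sum>i=1..n. \<Sum>j=1..n. B i j) = (\<Sum>j=1..n. \<Sum>i=1..n. B i j)" by (rule sum.swap)
  also have "\<dots> \<le> (\<Sum>j=1..n. tau j * (K * (2 * sqrt (real n))))"
    by (intro sum_mono colsum)
  also have "\<dots> = (K * (2 * sqrt (real n))) * (\<Sum>j=1..n. tau j)"
    by (simp add: sum_distrib_left mult_ac)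
  also have "\<dots> \<le> (K * (2 * sqrt (real n))) * (real n * (1 + ln (real n)))"
    using divisor_sum[of n] n K unfolding tau_def by (intro mult_left_mono) auto
  finally show ?thesis by (simp add: mult_ac)
qed



lemma final_arith:
  assumes n: "n \<ge> 2" and K: "K > 0"
  shows "real n + 4 * K * sqrt (real n) * (real n * (1 + ln (real n)))
         \<le> (1 / ln 2 + 4 * K * (1 / ln 2 + 1)) * real n powr (3/2) * ln (real n)"
proof -
  define L where "L = ln (2::real)"
  define l where "l = ln (real n)"
  define s where "s = sqrt (real n)"
  have L: "L > 0" by (simp add: L_def)
  have lL: "l \<ge> L" unfolding l_def L_def using n by simp
  have l: "l > 0" using L lL by simp
  have s: "s \<ge> 1" unfolding s_def using n by simp
  have np: "real n > 0" using n by simp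
  have pw: "real n powr (3/2) = real n * s"
  proof -
    have e: "(3/2::real) = 1 + 1/2" by simp
    have "real n powr (3/2) = real n powr (1 + 1/2)" by (simp only: e)
    also have "\<dots> = real n powr 1 * real n powr (1/2)" by (rule powr_add)
    also have "\<dots> = real n * s" using np by (simp add: s_def powr_half_sqrt)
    finally show ?thesis .
  qed
  have r: "1 \<le> l / L" using lL L by simp
  have r2: "1 \<le> s * (l / L)" using s r by (metis mult_mono' one_le_mult_iff order_trans mult_1_left zero_le_one less_imp_le L l divide_nonneg_pos less_eq_real_def)
  have t1: "real n \<le> real n * s * l / L"
    using mult_left_mono[OF r2, of "real n"] np by (simp add: mult_ac)
  have t2: "4 * K * s * (real n * (1 + l)) \<le> 4 * K * (real n * s * l / L) + 4 * K * (real n * s * l)"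
  proof -
    have "4 * K * s * (real n * (1 + l)) = 4 * K * (real n * s) * 1 + 4 * K * (real n * s * l)"
      by (simp add: algebra_simps)
    also have "4 * K * (real n * s) * 1 \<le> 4 * K * (real n * s) * (l / L)"
      using r K np s by (intro mult_left_mono) auto
    finally show ?thesis by (simp add: mult_ac)
  qed
  have "real n + 4 * K * s * (real n * (1 + l)) \<le> real n * s * l / L + 4 * K * (real n * s * l / L) + 4 * K * (real n * s * l)"
    using t1 t2 by linarith
  also have "\<dots> = (1 / L + 4 * K * (1 / L + 1)) * (real n * s) * l"
    by (simp add: algebra_simps)
  finally show ?thesis unfolding pw l_def s_def L_def .
qed

theorem proposition2:
  fixes \<alpha> :: real
  assumes "0 < \<alpha>" and "\<alpha> < 1"
  shows "\<exists>C>0. \<forall>n::nat\<ge>2.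
           measure_pmf.variance (walk_steps \<alpha> n) (\<lambda>\<omega>. \<Sum>i=1..n. vis_ind \<omega> i)
             \<le> C * real n powr (3/2) * ln (real n)"
proof -
  define K where "K = 8 / sqrt (2*\<alpha>*(1-\<alpha>))"
  have K: "K > 0" using assms by (simp add: K_def)
  define C where "C = 1 / ln 2 + 4 * K * (1 / ln 2 + 1)"
  have C: "C > 0" using K by (simp add: C_def add_pos_pos)
  show ?thesis
  proof (intro exI[of _ C] conjI allI impI C)
    fix n :: nat assume n: "n \<ge> 2"
    show "measure_pmf.variance (walk_steps \<alpha> n) (\<lambda>\<omega>. \<Sum>i=1..n. vis_ind \<omega> i) \<le> C * real n powr (3/2) * ln (real n)"
      using main_bound[OF assms n] final_arith[OF n K] unfolding K_def C_def by linarith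
  qed
qed


end
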